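(* Let $B>1$, $p>0$, $c_B>0$, and $\alpha\in\mathbb{R}$ with $4p+2-\alpha>0$. For integers $j$ let $N_j=c_BB^{2j}$ and $K_j^M(\alpha)=\frac1{N_j}\sum_{l\ge1}f_p^2(l/B^j)(2l+1)l^{-\alpha}$ with $f_p(x)=x^{2p}e^{-x^2}$, and let $$I_{p,s}(\alpha)=\frac{2}{c_B}\int_0^\infty t^{4p+1-\alpha}e^{-2t^2}(\log t)^s\,dt,\qquad s=0,1,2.$$ Then $I_{p,0}(\alpha)=\frac{2^{-(2p-\frac{\alpha}{2}+1)}}{c_B}\Gamma\big(2p+1-\frac{\alpha}{2}\big)$ and, as $j\to\infty$, $$K_j^M(\alpha)=\big(I_{p,0}(\alpha)+o(1)\big)B^{-\alpha j},$$ $$\frac{d}{d\alpha}K_j^M(\alpha)=-\Big(j\log B+\frac{I_{p,1}(\alpha)}{I_{p,0}(\alpha)}+o(1)\Big)K_j^M(\alpha),$$ $$\frac{d^2}{d\alpha^2}K_j^M(\alpha)=\Big(j^2\log^2B+2j\log B\,\frac{I_{p,1}(\alpha)}{I_{p,0}(\alpha)}+\frac{I_{p,2}(\alpha)}{I_{p,0}(\alpha)}+o(1)\Big)K_j^M(\alpha).$$ *)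

theory Defs
  imports "HOL-Analysis.Analysis"
begin

definition fp :: "real \<Rightarrow> real \<Rightarrow> real" where
  "fp p x = x powr (2 * p) * exp (- (x ^ 2))"

definition Nj :: "real \<Rightarrow> real \<Rightarrow> nat \<Rightarrow> real" where
  "Nj cB B j = cB * B ^ (2 * j)"

definition KM :: "real \<Rightarrow> real \<Rightarrow> real \<Rightarrow> nat \<Rightarrow> real \<Rightarrow> real" where
  "KM p cB B j \<alpha> = (1 / Nj cB B j) *
     (\<Sum>l. (fp p (real (Suc l) / B ^ j))\<^sup>2 * (2 * real (Suc l) + 1) * real (Suc l) powr (- \<alpha>))"

definition Ips :: "real \<Rightarrow> real \<Rightarrow> nat \<Rightarrow> real \<Rightarrow> real" where
  "Ips p cB s \<alpha> = (2 / cB) *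
     integral {0<..} (\<lambda>t. t powr (4 * p + 1 - \<alpha>) * exp (- 2 * t ^ 2) * (ln t) ^ s)"

end

theory Submission
  imports Defs "HOL-Real_Asymp.Real_Asymp"
begin
lemma bdd_from_lims:
  fixes f :: "real \<Rightarrow> real"
  assumes c: "continuous_on {0<..} f" and l0: "(f \<longlongrightarrow> 0) (at_right 0)"
    and li: "(f \<longlongrightarrow> 0) at_top"
  shows "\<exists>M. \<forall>x>0. \<bar>f x\<bar> \<le> M"
proof -
  have "eventually (\<lambda>x. dist (f x) 0 < 1) (at_right 0)" using tendstoD[OF l0] by simp
  then obtain e where e: "e > 0" "\<And>y. 0 < y \<Longrightarrow> y < e \<Longrightarrow> \<bar>f y\<bar> < 1"
    unfolding eventually_at_right_field by auto
  have "eventually (\<lambda>x. dist (f x) 0 < 1) at_top" using tendstoD[OF li] by simp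
  then obtain R where R: "\<And>y. y \<ge> R \<Longrightarrow> \<bar>f y\<bar> < 1"
    unfolding eventually_at_top_linorder by auto
  have "continuous_on {e..max e R} f" using e(1) by (intro continuous_on_subset[OF c]) auto
  then have "compact (f ` {e..max e R})" by (rule compact_continuous_image) simp
  then have "bounded (f ` {e..max e R})" by (rule compact_imp_bounded)
  then obtain M where M: "\<And>y. y \<in> {e..max e R} \<Longrightarrow> \<bar>f y\<bar> \<le> M"
    unfolding bounded_real by blast
  show ?thesis
  proof (intro exI allI impI)
    fix x :: real assume "x > 0"
    show "\<bar>f x\<bar> \<le> max 1 M"
    proof (cases "x < e")
      case True then show ?thesis using e(2)[OF \<open>x>0\<close>] by simp
    next
      case False
      show ?thesis
      proof (cases "x \<ge> R")
        case True then show ?thesis using R by force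
      next
        case False then show ?thesis using M[of x] \<open>\<not> x < e\<close> by simp
      qed
    qed
  qed
qed

lemma G_bound:
  fixes c :: real assumes "c > 0"
  shows "\<exists>M. \<forall>x>0. x powr c * (1 + ln x ^ 4) * exp (-2*x^2) \<le> M"
proof -
  have "\<exists>M. \<forall>x>0. \<bar>x powr c * (1 + ln x ^ 4) * exp (-2*x^2)\<bar> \<le> M"
    apply (rule bdd_from_lims)
      apply (intro continuous_intros; auto)
    using assms by real_asymp+
  then show ?thesis by (meson abs_ge_self order_trans)
qed

lemma ln_pow_le: "s \<le> 2 \<Longrightarrow> \<bar>(t::real)\<bar> ^ s \<le> 1 + t ^ 4"
proof -
  assume "s \<le> 2"
  then have "s = 0 \<or> s = 1 \<or> s = 2" by auto
  moreover have "\<bar>t\<bar> \<le> 1 + t^4"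
  proof (cases "\<bar>t\<bar> \<le> 1")
    case True have "t^4 \<ge> 0" by simp
    with True show ?thesis by linarith
  next
    case False
    then have "\<bar>t\<bar> \<le> \<bar>t\<bar>^4" by (smt (verit) power_increasing_iff one_le_numeral self_le_power zero_less_numeral)
    then show ?thesis by simp
  qed
  moreover have "t^2 \<le> 1 + t^4"
  proof -
    have "0 \<le> (t^2 - 1)^2" by simp
    also have "\<dots> = t^4 - 2*t^2 + 1" by (simp add: power2_diff power_mult[symmetric] field_simps)
    finally show ?thesis using zero_le_power2[of t] by linarith
  qed
  ultimately show ?thesis by auto
qed

lemma neg0: "negligible {y \<in> {0..x::real} - {0<..x}. f y \<noteq> 0}"
  by (rule negligible_subset[of "{0}"]) auto
lemma neg0': "negligible {y \<in> {0<..x::real} - {0..x}. f y \<noteq> 0}"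
  by (rule negligible_subset[of "{}"]) auto

lemma integral_0_closed: "integral {0..x::real} (f::real\<Rightarrow>real) = integral {0<..x} f"
  by (rule integral_spike_set; rule negligible_subset[of "{0}"]; auto)
lemma integrable_0_closed: "(f::real\<Rightarrow>real) integrable_on {0<..x::real} \<Longrightarrow> f integrable_on {0..x}"
  by (erule integrable_spike_set; rule negligible_subset[of "{0}"]; auto)

lemma summable_Suc_powr: "\<beta> > 1 \<Longrightarrow> summable (\<lambda>l. real (Suc l) powr (-\<beta>))"
proof -
  assume "\<beta> > 1"
  then have "summable (\<lambda>n. real n powr (-\<beta>))" by (subst summable_real_powr_iff) simp
  then show ?thesis by (subst summable_Suc_iff)
qed

lemma psi_sum:
  fixes \<psi> :: "real \<Rightarrow> real"
  assumes \<beta>: "1 < \<beta>" and b: "\<And>x. x > 0 \<Longrightarrow> \<bar>\<psi> x\<bar> \<le> C * x powr (-\<beta>)"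
  shows "\<exists>K. \<forall>h>0. summable (\<lambda>l. \<psi> (real (Suc l) * h)) \<and>
           \<bar>h * (\<Sum>l. h * \<psi> (real (Suc l) * h))\<bar> \<le> K * h powr (2-\<beta>)"
proof -
  define Z where "Z = (\<Sum>l. real (Suc l) powr (-\<beta>))"
  have sZ: "summable (\<lambda>l. real (Suc l) powr (-\<beta>))" using summable_Suc_powr \<beta> by blast
  show ?thesis
  proof (intro exI allI impI conjI)
    fix h :: real assume h: "h > 0"
    have bd: "norm (\<psi> (real (Suc l) * h)) \<le> C * h powr (-\<beta>) * real (Suc l) powr (-\<beta>)" for l
      using b[of "real (Suc l) * h"] h by (simp add: powr_mult mult_ac)
    have sg: "summable (\<lambda>l. C * h powr (-\<beta>) * real (Suc l) powr (-\<beta>))"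
      by (intro summable_mult sZ)
    show sm: "summable (\<lambda>l. \<psi> (real (Suc l) * h))"
      by (rule summable_comparison_test'[OF sg bd])
    have "norm (\<Sum>l. \<psi> (real (Suc l) * h)) \<le> (\<Sum>l. C * h powr (-\<beta>) * real (Suc l) powr (-\<beta>))"
      by (rule norm_suminf_le[OF bd sg])
    also have "\<dots> = C * h powr (-\<beta>) * Z" unfolding Z_def by (rule suminf_mult[OF sZ])
    finally have 1: "\<bar>\<Sum>l. \<psi> (real (Suc l) * h)\<bar> \<le> C * h powr (-\<beta>) * Z" by simp
    have "(\<Sum>l. h * \<psi> (real (Suc l) * h)) = h * (\<Sum>l. \<psi> (real (Suc l) * h))"
      by (rule suminf_mult[OF sm])
    then have "\<bar>h * (\<Sum>l. h * \<psi> (real (Suc l) * h))\<bar> = h * h * \<bar>\<Sum>l. \<psi> (real (Suc l) * h)\<bar>"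
      using h by (simp add: abs_mult)
    also have "\<dots> \<le> h * h * (C * h powr (-\<beta>) * Z)" using 1 h by (simp add: mult_left_mono)
    also have "\<dots> = (C * Z) * (h powr 2 * h powr (-\<beta>))" using h by (simp add: power2_eq_square)
    also have "\<dots> = (C * Z) * h powr (2 - \<beta>)" by (simp add: powr_add[symmetric])
    finally show "\<bar>h * (\<Sum>l. h * \<psi> (real (Suc l) * h))\<bar> \<le> C * Z * h powr (2 - \<beta>)" .
  qed
qed

lemma riemann_rate:
  fixes \<phi> \<phi>' :: "real \<Rightarrow> real" and \<beta> C1 C2 C3 :: real
  assumes \<beta>: "1 < \<beta>" "\<beta> < 2"
  and der: "\<And>x. x > 0 \<Longrightarrow> (\<phi> has_real_derivative \<phi>' x) (at x)"
  and b1: "\<And>x. x > 0 \<Longrightarrow> \<bar>\<phi> x\<bar> \<le> C1 * x powr (1-\<beta>)"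
  and b2: "\<And>x. x > 0 \<Longrightarrow> \<bar>\<phi> x\<bar> \<le> C2 * x powr (-2)"
  and b3: "\<And>x. x > 0 \<Longrightarrow> \<bar>\<phi>' x\<bar> \<le> C3 * x powr (-\<beta>)"
  shows "\<exists>K. \<forall>h>0. summable (\<lambda>l. \<phi> (real (Suc l) * h)) \<and>
           \<bar>(\<Sum>l. h * \<phi> (real (Suc l) * h)) - integral {0<..} \<phi>\<bar> \<le> K * h powr (2-\<beta>)"
proof -
  have C1: "C1 \<ge> 0" using b1[of 1] by simp
  have C2: "C2 \<ge> 0" using b2[of 1] by simp
  have C3: "C3 \<ge> 0" using b3[of 1] by simp
  define g where "g x = (if x \<le> 1 then C1 * x powr (1-\<beta>) else C2 * x powr (-2))" for x :: real
  have g0: "g x \<ge> 0" for x using C1 C2 by (simp add: g_def)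
  have gI: "g integrable_on {0<..}"
  proof -
    have "(\<lambda>x. x powr (1-\<beta>)) integrable_on {0<..1}"
      by (rule integrable_on_powr_from_0') (use \<beta> in auto)
    then have "(\<lambda>x. C1 * x powr (1-\<beta>)) integrable_on {0<..1}"
      by (rule integrable_on_mult_right)
    then have i1: "g integrable_on {0<..1}"
      by (subst integrable_cong[where g="\<lambda>x. C1 * x powr (1-\<beta>)"]) (auto simp: g_def)
    have "(\<lambda>x::real. x powr (-2)) integrable_on {1..}"
      using has_integral_powr_to_inf[of "-2" 1] by (auto simp: integrable_on_def)
    then have "(\<lambda>x. C2 * x powr (-2)) integrable_on {1..}"
      by (rule integrable_on_mult_right)
    then have i2: "g integrable_on {1..}"
      by (rule integrable_spike[where S="{1}"]) (auto simp: g_def)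
    have "g integrable_on {0<..1} \<union> {1..}"
      by (rule integrable_Un[OF _ i1 i2]) (rule negligible_subset[of "{1}"], auto)
    moreover have "{0<..1} \<union> {1..} = ({0<..}::real set)" by auto
    ultimately show ?thesis by simp
  qed
  have phib: "\<And>x. x \<in> {0<..} \<Longrightarrow> norm (\<phi> x) \<le> g x" using b1 b2 by (auto simp: g_def)
  have contphi: "continuous_on {0<..} \<phi>"
    by (rule continuous_at_imp_continuous_on) (auto intro: DERIV_isCont der)
  have abs: "\<phi> absolutely_integrable_on {0<..}"
    by (rule measurable_bounded_by_integrable_imp_absolutely_integrable[OF
          continuous_imp_measurable_on_sets_lebesgue[OF contphi] _ gI phib]) auto
  have intx: "\<phi> integrable_on {0<..x}" for x
  proof -
    have "set_integrable lebesgue {0<..x} \<phi>"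
      by (rule set_integrable_subset[OF abs]) auto
    then show ?thesis by (rule set_lebesgue_integral_eq_integral(1))
  qed
  have intc: "\<phi> integrable_on {0..x}" for x by (rule integrable_0_closed[OF intx])
  define J where "J x = integral {0..x} \<phi>" for x
  define Z where "Z = (\<Sum>l. real (Suc l) powr (-\<beta>))"
  have sZ: "summable (\<lambda>l. real (Suc l) powr (-\<beta>))" using summable_Suc_powr \<beta> by blast
  define K where "K = C1 + C1 / (2-\<beta>) + C3 * Z"
  show ?thesis
  proof (intro exI allI impI conjI)
    fix h :: real assume h: "h > 0"
    have bd: "norm (\<phi> (real (Suc l) * h)) \<le> C2 * h powr (-2) * real (Suc l) powr (-2)" for l
      using b2[of "real (Suc l) * h"] h by (simp add: powr_mult mult_ac)
    have sg: "summable (\<lambda>l. C2 * h powr (-2) * real (Suc l) powr (-2))"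
      by (intro summable_mult summable_Suc_powr) simp
    show sm: "summable (\<lambda>l. \<phi> (real (Suc l) * h))"
      by (rule summable_comparison_test'[OF sg bd])
    define E where "E N = (\<Sum>l<Suc N. h * \<phi> (real (Suc l) * h)) - J (real (Suc N) * h)" for N
    have Jlim: "(\<lambda>N. J (real (Suc N) * h)) \<longlonglongrightarrow> integral {0<..} \<phi>"
    proof -
      define f where "f N t = (if t \<in> {..real (Suc N) * h} then \<phi> t else 0)" for N t
      have eqS: "{..real (Suc N) * h} \<inter> {0<..} = {0<..real (Suc N) * h}" for N by auto
      have fI: "f N integrable_on {0<..}" for N
        unfolding f_def integrable_restrict_Int eqS by (rule intx)
      have fJ: "integral {0<..} (f N) = J (real (Suc N) * h)" for N
        unfolding f_def integral_restrict_Int eqS J_def integral_0_closed ..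
      have fb: "norm (f N x) \<le> g x" if "x \<in> {0<..}" for N x
        using phib[OF that] g0[of x] by (auto simp: f_def)
      have fc: "(\<lambda>N. f N x) \<longlonglongrightarrow> \<phi> x" if "x \<in> {0<..}" for x
      proof (rule tendsto_eventually)
        obtain n :: nat where n: "x / h < real n" using reals_Archimedean2 by blast
        have "x \<le> real (Suc N) * h" if "N \<ge> n" for N
        proof -
          have "x < real n * h" using n h by (simp add: field_simps)
          also have "\<dots> \<le> real (Suc N) * h" using that h by (intro mult_right_mono) auto
          finally show ?thesis by simp
        qed
        then show "eventually (\<lambda>N. f N x = \<phi> x) sequentially"
          unfolding eventually_sequentially f_def by auto
      qed
      have "(\<lambda>N. integral {0<..} (f N)) \<longlonglongrightarrow> integral {0<..} \<phi>"
        by (rule dominated_convergence(2)[OF fI gI fb fc])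
      then show ?thesis unfolding fJ .
    qed
    have Slim: "(\<lambda>N. (\<Sum>l<Suc N. h * \<phi> (real (Suc l) * h))) \<longlonglongrightarrow> (\<Sum>l. h * \<phi> (real (Suc l) * h))"
      using summable_LIMSEQ[OF summable_mult[OF sm, of h]] by (rule LIMSEQ_Suc)
    have Elim: "(\<lambda>N. \<bar>E N\<bar>) \<longlonglongrightarrow> \<bar>(\<Sum>l. h * \<phi> (real (Suc l) * h)) - integral {0<..} \<phi>\<bar>"
      unfolding E_def by (intro tendsto_intros Slim Jlim)
    have Jstep: "J b = J a + integral {a..b} \<phi>" if "0 \<le> a" "a \<le> b" for a b
      unfolding J_def using Henstock_Kurzweil_Integration.integral_combine[OF that intc] by simp
    have hh: "h * h * h powr (-\<beta>) = h powr (2-\<beta>)"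
    proof -
      have "h * h * h powr (-\<beta>) = h powr 2 * h powr (-\<beta>)" using h by (simp add: power2_eq_square)
      also have "\<dots> = h powr (2-\<beta>)" using powr_add[of h 2 "-\<beta>"] by simp
      finally show ?thesis .
    qed
    have base: "\<bar>E 0\<bar> \<le> (C1 + C1 / (2-\<beta>)) * h powr (2-\<beta>)"
    proof -
      have E0: "E 0 = h * \<phi> h - integral {0<..h} \<phi>"
        unfolding E_def J_def integral_0_closed by simp
      have "\<bar>h * \<phi> h\<bar> \<le> h * (C1 * h powr (1-\<beta>))"
        using b1[OF h] h by (simp add: abs_mult)
      also have "\<dots> = C1 * (h powr 1 * h powr (1-\<beta>))" using h by simp
      also have "\<dots> = C1 * h powr (2-\<beta>)" using powr_add[of h 1 "1-\<beta>"] by simp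
      finally have 1: "\<bar>h * \<phi> h\<bar> \<le> C1 * h powr (2-\<beta>)" .
      have pI: "((\<lambda>x. x powr (1-\<beta>)) has_integral h powr (2-\<beta>) / (2-\<beta>)) {0..h}"
        using has_integral_powr_from_0[of "1-\<beta>" h] \<beta> h by simp
      then have pI': "((\<lambda>x. C1 * x powr (1-\<beta>)) has_integral C1 * (h powr (2-\<beta>) / (2-\<beta>))) {0<..h}"
      proof -
        have "((\<lambda>x. x powr (1-\<beta>)) has_integral h powr (2-\<beta>) / (2-\<beta>)) {0<..h}"
        proof -
          have "((\<lambda>x. x powr (1-\<beta>)) has_integral h powr (2-\<beta>) / (2-\<beta>)) {0..h} =
                ((\<lambda>x. x powr (1-\<beta>)) has_integral h powr (2-\<beta>) / (2-\<beta>)) {0<..h}"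
            by (rule has_integral_spike_set_eq; rule negligible_subset[of "{0}"]; auto)
          then show ?thesis using pI by simp
        qed
        then show ?thesis by (rule has_integral_mult_right)
      qed
      have "norm (integral {0<..h} \<phi>) \<le> integral {0<..h} (\<lambda>x. C1 * x powr (1-\<beta>))"
        by (rule integral_norm_bound_integral[OF intx]) (use pI' b1 in \<open>auto\<close>)
      also have "\<dots> = C1 * (h powr (2-\<beta>) / (2-\<beta>))" using pI' by blast
      finally have 2: "\<bar>integral {0<..h} \<phi>\<bar> \<le> C1 / (2-\<beta>) * h powr (2-\<beta>)" by simp
      have "\<bar>h * \<phi> h - integral {0<..h} \<phi>\<bar> \<le> \<bar>h * \<phi> h\<bar> + \<bar>integral {0<..h} \<phi>\<bar>"
        by (rule abs_triangle_ineq4)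
      moreover have "(C1 + C1 / (2-\<beta>)) * h powr (2-\<beta>) = C1 * h powr (2-\<beta>) + C1 / (2-\<beta>) * h powr (2-\<beta>)"
        by (rule distrib_right)
      ultimately show ?thesis unfolding E0 using 1 2 by linarith
    qed
    have step: "\<bar>h * \<phi> (real (Suc (Suc N)) * h) - integral {real (Suc N) * h..real (Suc (Suc N)) * h} \<phi>\<bar>
        \<le> C3 * h powr (2-\<beta>) * real (Suc N) powr (-\<beta>)" for N
    proof -
      define a where "a = real (Suc N) * h"
      define b where "b = real (Suc (Suc N)) * h"
      have a: "a > 0" "b = a + h" using h unfolding a_def b_def by (simp, simp add: algebra_simps)
      have iab: "\<phi> integrable_on {a..b}"
        by (rule integrable_on_subinterval[OF intc[of b]]) (use a h in auto)
      have HI: "((\<lambda>x. \<phi> b - \<phi> x) has_integral (\<phi> b * (b - a) - integral {a..b} \<phi>)) {a..b}"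
      proof (rule has_integral_diff)
        show "((\<lambda>x. \<phi> b) has_integral \<phi> b * (b - a)) {a..b}"
          using has_integral_const_real[of "\<phi> b" a b] a h by (simp add: mult.commute)
      qed (rule integrable_integral[OF iab])
      have pw: "norm (\<phi> b - \<phi> x) \<le> h * C3 * a powr (-\<beta>)" if x: "x \<in> {a..b} - {}" for x
      proof (cases "x = b")
        case True then show ?thesis using C3 h by simp
      next
        case False
        then have xb: "x < b" using x by auto
        have "\<exists>z>x. z < b \<and> \<phi> b - \<phi> x = (b - x) * \<phi>' z"
          by (rule MVT2[OF xb]) (use x a in \<open>auto intro: der\<close>)
        then obtain z where z: "x < z" "z < b" "\<phi> b - \<phi> x = (b - x) * \<phi>' z" by blast
        have za: "a \<le> z" using z x by auto
        have "norm (\<phi> b - \<phi> x) = (b - x) * \<bar>\<phi>' z\<bar>" using z xb by (simp add: abs_mult)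
        also have "\<dots> \<le> h * (C3 * z powr (-\<beta>))"
          using b3[of z] za a x by (intro mult_mono) auto
        also have "\<dots> \<le> h * (C3 * a powr (-\<beta>))"
          using h C3 powr_mono2'[of "-\<beta>" a z] za a \<beta> by (intro mult_left_mono) auto
        finally show ?thesis by simp
      qed
      have "norm (\<phi> b * (b - a) - integral {a..b} \<phi>) \<le> h * C3 * a powr (-\<beta>) * Henstock_Kurzweil_Integration.content {a..b}"
        by (rule has_integral_bound_real[OF _ _ HI pw]) (use h C3 in auto)
      also have "Henstock_Kurzweil_Integration.content {a..b} = h" using a h by simp
      also have "h * C3 * a powr (-\<beta>) * h = C3 * (h * h * h powr (-\<beta>)) * real (Suc N) powr (-\<beta>)"
        unfolding a_def using h by (simp add: powr_mult)
      finally show ?thesis unfolding hh a_def[symmetric] b_def[symmetric] using a by (simp add: mult.commute)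
    qed
    have Ebd: "\<bar>E N\<bar> \<le> (C1 + C1 / (2-\<beta>)) * h powr (2-\<beta>) + C3 * h powr (2-\<beta>) * (\<Sum>l<N. real (Suc l) powr (-\<beta>))" for N
    proof (induction N)
      case 0 then show ?case using base by simp
    next
      case (Suc N)
      have "E (Suc N) = E N + (h * \<phi> (real (Suc (Suc N)) * h) - integral {real (Suc N) * h..real (Suc (Suc N)) * h} \<phi>)"
        unfolding E_def using Jstep[of "real (Suc N) * h" "real (Suc (Suc N)) * h"] h by simp
      then have "\<bar>E (Suc N)\<bar> \<le> \<bar>E N\<bar> + C3 * h powr (2-\<beta>) * real (Suc N) powr (-\<beta>)"
        using step[of N] by linarith
      then show ?case using Suc.IH by (simp add: distrib_left)
    qed
    have "\<bar>E N\<bar> \<le> K * h powr (2-\<beta>)" for N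
    proof -
      have "(\<Sum>l<N. real (Suc l) powr (-\<beta>)) \<le> Z"
        unfolding Z_def by (rule sum_le_suminf[OF sZ]) auto
      then have "C3 * h powr (2-\<beta>) * (\<Sum>l<N. real (Suc l) powr (-\<beta>)) \<le> C3 * h powr (2-\<beta>) * Z"
        using C3 by (intro mult_left_mono) auto
      then show ?thesis using Ebd[of N] unfolding K_def by (simp add: algebra_simps)
    qed
    then show "\<bar>(\<Sum>l. h * \<phi> (real (Suc l) * h)) - integral {0<..} \<phi>\<bar> \<le> K * h powr (2-\<beta>)"
      by (intro LIMSEQ_le_const2[OF Elim]) auto
  qed
qed

lemma termbound:
  fixes c :: real assumes "c \<ge> 0"
  shows "\<bar>c * real (Suc l) powr (-y) * (- ln (real (Suc l))) ^ m\<bar> \<le> c * real (Suc l) powr (real m - y)"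
proof -
  define n where "n = real (Suc l)"
  have n: "n \<ge> 1" unfolding n_def by simp
  have ln0: "ln n \<ge> 0" using n by simp
  have "ln n < n" by (rule ln_less_self) (use n in simp)
  then have "ln n ^ m \<le> n ^ m" using ln0 by (intro power_mono) auto
  also have "\<dots> = n powr real m" using n by (simp add: powr_realpow)
  finally have lm: "ln n ^ m \<le> n powr real m" .
  have "\<bar>c * n powr (-y) * (- ln n) ^ m\<bar> = c * n powr (-y) * ln n ^ m"
    using assms ln0 by (simp add: abs_mult power_abs)
  also have "\<dots> \<le> c * n powr (-y) * n powr real m"
    using lm assms by (intro mult_left_mono) auto
  also have "\<dots> = c * n powr (real m - y)" using n by (simp add: powr_add[symmetric])
  finally show ?thesis unfolding n_def .
qed

lemma dir_deriv:
  fixes c :: "nat \<Rightarrow> real"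
  assumes c0: "\<And>l. c l \<ge> 0" and summ: "\<And>r. summable (\<lambda>l. c l * real (Suc l) powr r)"
  shows "((\<lambda>y. \<Sum>l. c l * real (Suc l) powr (-y) * (- ln (real (Suc l))) ^ k) has_real_derivative
          (\<Sum>l. c l * real (Suc l) powr (-x) * (- ln (real (Suc l))) ^ Suc k)) (at x)"
proof (rule has_field_derivative_series'(2))
  show "convex {x-1<..<x+1}" by simp
  show "x \<in> {x-1<..<x+1}" by simp
  show "x \<in> interior {x-1<..<x+1}" by simp
  show "((\<lambda>y. c n * real (Suc n) powr (-y) * (- ln (real (Suc n))) ^ k) has_real_derivative
         c n * real (Suc n) powr (-y) * (- ln (real (Suc n))) ^ Suc k) (at y within {x-1<..<x+1})" for n y
    by (rule has_field_derivative_at_within)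
       (auto intro!: derivative_eq_intros simp: algebra_simps)
  show "summable (\<lambda>n. c n * real (Suc n) powr (-x) * (- ln (real (Suc n))) ^ k)"
    by (rule summable_comparison_test'[OF summ[of "real k - x"]]) (use termbound c0 in auto)
  show "uniformly_convergent_on {x-1<..<x+1}
          (\<lambda>N y. \<Sum>n<N. c n * real (Suc n) powr (-y) * (- ln (real (Suc n))) ^ Suc k)"
  proof (rule Weierstrass_m_test'[OF _ summ[of "real k + 2 - x"]])
    fix n y assume y: "y \<in> {x-1<..<x+1}"
    have "norm (c n * real (Suc n) powr (-y) * (- ln (real (Suc n))) ^ Suc k) \<le> c n * real (Suc n) powr (real (Suc k) - y)"
      using termbound[where c="c n" and l=n and y=y and m="Suc k", OF c0] by (simp only: real_norm_def)
    also have "\<dots> \<le> c n * real (Suc n) powr (real k + 2 - x)"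
      using y c0[of n] by (intro mult_left_mono powr_mono) auto
    finally show "norm (c n * real (Suc n) powr (-y) * (- ln (real (Suc n))) ^ Suc k) \<le> c n * real (Suc n) powr (real k + 2 - x)" .
  qed
qed

definition phs :: "real \<Rightarrow> nat \<Rightarrow> real \<Rightarrow> real" where
  "phs a s x = x powr a * exp (- 2 * x ^ 2) * ln x ^ s"

lemma pow_bound:
  assumes c: "c > 0" and s: "s \<le> 2" and a: "a' = c + d"
  shows "\<exists>M. \<forall>x>0. \<bar>phs a' s x\<bar> \<le> M * x powr d"
proof -
  obtain M where M: "\<And>x. x > 0 \<Longrightarrow> x powr c * (1 + ln x ^ 4) * exp (-2*x^2) \<le> M"
    using G_bound[OF c] by blast
  show ?thesis
  proof (intro exI allI impI)
    fix x :: real assume x: "x > 0"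
    have "\<bar>phs a' s x\<bar> = x powr c * x powr d * exp (-2*x^2) * \<bar>ln x\<bar> ^ s"
      unfolding phs_def a using x by (simp add: powr_add abs_mult power_abs)
    also have "\<dots> \<le> x powr c * x powr d * exp (-2*x^2) * (1 + ln x ^ 4)"
      by (intro mult_left_mono ln_pow_le s) auto
    also have "\<dots> = (x powr c * (1 + ln x ^ 4) * exp (-2*x^2)) * x powr d" by (simp add: mult_ac)
    also have "\<dots> \<le> M * x powr d" by (intro mult_right_mono M x) auto
    finally show "\<bar>phs a' s x\<bar> \<le> M * x powr d" .
  qed
qed

lemma phs_deriv:
  assumes x: "x > 0"
  shows "(phs a s has_real_derivative (a * phs (a-1) s x - 4 * phs (a+1) s x + real s * phs (a-1) (s-1) x)) (at x)"
proof -
  have d1: "((\<lambda>x. x powr a) has_real_derivative a * x powr (a - 1)) (at x)"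
    by (rule has_real_derivative_powr[OF x])
  have d2: "((\<lambda>x. exp (- 2 * x ^ 2)) has_real_derivative exp (- 2 * x ^ 2) * (- 4 * x)) (at x)"
    by (auto intro!: derivative_eq_intros)
  have d3: "((\<lambda>x. ln x ^ s) has_real_derivative real s * ln x ^ (s - 1) * (1 / x)) (at x)"
    using x by (auto intro!: derivative_eq_intros)
  have D: "((\<lambda>x. x powr a * exp (- 2 * x ^ 2) * ln x ^ s) has_real_derivative
     ((a * x powr (a - 1)) * exp (- 2 * x ^ 2) + (exp (- 2 * x ^ 2) * (- 4 * x)) * x powr a) * ln x ^ s
      + (real s * ln x ^ (s - 1) * (1 / x)) * (x powr a * exp (- 2 * x ^ 2))) (at x)"
    by (rule DERIV_mult[OF DERIV_mult[OF d1 d2] d3])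
  have e1: "x powr a * x = x powr (a+1)" using x by (simp add: powr_add)
  have e2: "x powr a * (1 / x) = x powr (a - 1)" using x by (simp add: powr_diff)
  have "((a * x powr (a - 1)) * exp (- 2 * x ^ 2) + (exp (- 2 * x ^ 2) * (- 4 * x)) * x powr a) * ln x ^ s
      + (real s * ln x ^ (s - 1) * (1 / x)) * (x powr a * exp (- 2 * x ^ 2))
      = a * phs (a-1) s x - 4 * (x powr a * x) * exp (- 2 * x ^ 2) * ln x ^ s + real s * ((x powr a * (1/x)) * exp (- 2 * x ^ 2) * ln x ^ (s - 1))"
    unfolding phs_def by (simp add: algebra_simps)
  also have "\<dots> = a * phs (a-1) s x - 4 * phs (a+1) s x + real s * phs (a-1) (s-1) x"
    unfolding e1 e2 phs_def by simp
  finally show ?thesis using D unfolding phs_def[abs_def] by simp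
qed

lemma A_rate:
  fixes a cB :: real and s :: nat
  assumes a: "a > -1" and s: "s \<le> 2"
  shows "\<exists>\<delta>>0. \<exists>K. \<forall>h>0. summable (\<lambda>l. phs a s (real (Suc l) * h)) \<and>
     summable (\<lambda>l. phs (a-1) s (real (Suc l) * h)) \<and>
     \<bar>2/cB * (\<Sum>l. h * phs a s (real (Suc l) * h)) + 1/cB * (h * (\<Sum>l. h * phs (a-1) s (real (Suc l) * h)))
       - 2/cB * integral {0<..} (phs a s)\<bar> \<le> K * h powr \<delta>"
proof -
  define \<beta> where "\<beta> = (max 1 (1-a) + 2) / 2"
  have mx: "max 1 (1-a) \<ge> 1-a" "max 1 (1-a) \<ge> 1" "max 1 (1-a) < 2" using a by auto
  have \<beta>: "1 < \<beta>" "\<beta> < 2" "a + \<beta> - 1 > 0" using mx unfolding \<beta>_def by (simp_all add: field_simps)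
  obtain M1 where M1: "\<And>x. x>0 \<Longrightarrow> \<bar>phs a s x\<bar> \<le> M1 * x powr (1-\<beta>)"
    using pow_bound[of "a+\<beta>-1" s a "1-\<beta>"] \<beta> s by auto
  obtain M2 where M2: "\<And>x. x>0 \<Longrightarrow> \<bar>phs a s x\<bar> \<le> M2 * x powr (-2)"
    using pow_bound[of "a+2" s a "-2"] a s by auto
  obtain M3 where M3: "\<And>x. x>0 \<Longrightarrow> \<bar>phs (a-1) s x\<bar> \<le> M3 * x powr (-\<beta>)"
    using pow_bound[of "a-1+\<beta>" s "a-1" "-\<beta>"] \<beta> s by auto
  obtain M4 where M4: "\<And>x. x>0 \<Longrightarrow> \<bar>phs (a+1) s x\<bar> \<le> M4 * x powr (-\<beta>)"
    using pow_bound[of "a+1+\<beta>" s "a+1" "-\<beta>"] \<beta> s by auto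
  obtain M5 where M5: "\<And>x. x>0 \<Longrightarrow> \<bar>phs (a-1) (s-1) x\<bar> \<le> M5 * x powr (-\<beta>)"
  proof -
    have "s - 1 \<le> 2" using s by simp
    then show ?thesis using that pow_bound[of "a-1+\<beta>" "s-1" "a-1" "-\<beta>"] \<beta> by auto
  qed
  define C3 where "C3 = \<bar>a\<bar> * M3 + 4 * M4 + real s * M5"
  have b3: "\<bar>a * phs (a-1) s x - 4 * phs (a+1) s x + real s * phs (a-1) (s-1) x\<bar> \<le> C3 * x powr (-\<beta>)"
    if x: "x > 0" for x
  proof -
    have "\<bar>a * phs (a-1) s x - 4 * phs (a+1) s x + real s * phs (a-1) (s-1) x\<bar>
        \<le> \<bar>a\<bar> * \<bar>phs (a-1) s x\<bar> + 4 * \<bar>phs (a+1) s x\<bar> + real s * \<bar>phs (a-1) (s-1) x\<bar>"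
      using order_trans[OF abs_triangle_ineq add_right_mono[OF abs_triangle_ineq4],
          of "a * phs (a-1) s x" "4 * phs (a+1) s x" "real s * phs (a-1) (s-1) x"]
      by (simp only: abs_mult abs_of_nat abs_numeral)
    also have "\<dots> \<le> \<bar>a\<bar> * (M3 * x powr (-\<beta>)) + 4 * (M4 * x powr (-\<beta>)) + real s * (M5 * x powr (-\<beta>))"
      by (intro add_mono mult_left_mono M3 M4 M5 x) auto
    also have "\<dots> = C3 * x powr (-\<beta>)" by (simp add: C3_def algebra_simps)
    finally show ?thesis .
  qed
  obtain K1 where K1: "\<And>h. h>0 \<Longrightarrow> summable (\<lambda>l. phs a s (real (Suc l) * h)) \<and>
      \<bar>(\<Sum>l. h * phs a s (real (Suc l) * h)) - integral {0<..} (phs a s)\<bar> \<le> K1 * h powr (2-\<beta>)"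
    using riemann_rate[OF \<beta>(1,2) phs_deriv M1 M2 b3] by blast
  obtain K2 where K2: "\<And>h. h>0 \<Longrightarrow> summable (\<lambda>l. phs (a-1) s (real (Suc l) * h)) \<and>
      \<bar>h * (\<Sum>l. h * phs (a-1) s (real (Suc l) * h))\<bar> \<le> K2 * h powr (2-\<beta>)"
    using psi_sum[OF \<beta>(1) M3] by blast
  show ?thesis
  proof (rule exI[of _ "2-\<beta>"], intro conjI exI[of _ "\<bar>2/cB\<bar> * K1 + \<bar>1/cB\<bar> * K2"] allI impI)
    show "2 - \<beta> > 0" using \<beta> by simp
    fix h :: real assume h: "h > 0"
    show "summable (\<lambda>l. phs a s (real (Suc l) * h))" using K1[OF h] by blast
    show "summable (\<lambda>l. phs (a-1) s (real (Suc l) * h))" using K2[OF h] by blast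
    define S1 where "S1 = (\<Sum>l. h * phs a s (real (Suc l) * h))"
    define S2 where "S2 = h * (\<Sum>l. h * phs (a-1) s (real (Suc l) * h))"
    define I where "I = integral {0<..} (phs a s)"
    have 1: "\<bar>S1 - I\<bar> \<le> K1 * h powr (2-\<beta>)" using K1[OF h] unfolding S1_def I_def by blast
    have 2: "\<bar>S2\<bar> \<le> K2 * h powr (2-\<beta>)" using K2[OF h] unfolding S2_def by blast
    have "\<bar>2/cB * S1 + 1/cB * S2 - 2/cB * I\<bar> = \<bar>2/cB * (S1 - I) + 1/cB * S2\<bar>" by (simp add: algebra_simps diff_divide_distrib)
    also have "\<dots> \<le> \<bar>2/cB\<bar> * \<bar>S1 - I\<bar> + \<bar>1/cB\<bar> * \<bar>S2\<bar>" by (metis abs_mult abs_triangle_ineq)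
    also have "\<dots> \<le> \<bar>2/cB\<bar> * (K1 * h powr (2-\<beta>)) + \<bar>1/cB\<bar> * (K2 * h powr (2-\<beta>))"
      by (intro add_mono mult_left_mono 1 2) auto
    also have "\<dots> = (\<bar>2/cB\<bar> * K1 + \<bar>1/cB\<bar> * K2) * h powr (2-\<beta>)" by (simp add: algebra_simps)
    finally show "\<bar>2/cB * (\<Sum>l. h * phs a s (real (Suc l) * h)) + 1/cB * (h * (\<Sum>l. h * phs (a-1) s (real (Suc l) * h)))
       - 2/cB * integral {0<..} (phs a s)\<bar> \<le> (\<bar>2/cB\<bar> * K1 + \<bar>1/cB\<bar> * K2) * h powr (2-\<beta>)"
      by (simp only: S1_def S2_def I_def)
  qed
qed

lemma gauss_gamma:
  fixes a :: real assumes a: "a > -1"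
  shows "integral {0<..} (\<lambda>t. t powr a * exp (- 2 * t ^ 2) * ln t ^ 0) =
         1/4 * 2 powr (-(a-1)/2) * Gamma ((a+1)/2)"
proof -
  define z where "z = (a+1)/2"
  have z: "z > 0" using a by (simp add: z_def)
  define c where "c = 1/4 * 2 powr (-(a-1)/2)"
  define f where "f u = 1/4 * (u / 2) powr ((a - 1) / 2) / exp u" for u :: real
  have G0: "((\<lambda>t. t powr (z - 1) / exp t) has_integral Gamma z) {0<..}"
  proof -
    have "((\<lambda>t. t powr (z - 1) / exp t) has_integral Gamma z) {0..}"
      by (rule Gamma_integral_real[OF z])
    moreover have "((\<lambda>t. t powr (z - 1) / exp t) has_integral Gamma z) {0..} =
                   ((\<lambda>t. t powr (z - 1) / exp t) has_integral Gamma z) {0<..}"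
      by (rule has_integral_spike_set_eq; rule negligible_subset[of "{0}"]; auto)
    ultimately show ?thesis by simp
  qed
  have p: "2 powr ((1 - a) / 2) * 2 powr ((a - 1) / 2) = (1::real)"
  proof -
    have e: "(1-a)/2 + (a-1)/2 = (0::real)" by (simp add: field_simps)
    show ?thesis by (simp add: powr_add[symmetric] e)
  qed
  have H: "((\<lambda>t. c * (t powr (z - 1) / exp t)) has_integral c * Gamma z) {0<..}"
    by (rule has_integral_mult_right[OF G0])
  have E: "c * (t powr (z - 1) / exp t) = f t" if "t \<in> {0<..}" for t
    using that p by (simp add: c_def f_def z_def powr_divide powr_minus field_simps)
  have fI: "(f has_integral c * Gamma z) {0<..}"
    using has_integral_cong[of "{0<..}" "\<lambda>t. c * (t powr (z-1) / exp t)" f "c * Gamma z"] H E by blast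
  have fA: "f absolutely_integrable_on {0<..}"
    by (rule nonnegative_absolutely_integrable_1) (use fI in \<open>auto simp: f_def\<close>)
  define g where "g t = 2 * t ^ 2" for t :: real
  have der: "(g has_real_derivative 4 * t) (at t within {0<..})" for t
    unfolding g_def by (auto intro!: derivative_eq_intros)
  have inj: "inj_on g {0<..}"
    unfolding g_def inj_on_def by (auto simp: power2_eq_iff_nonneg)
  have img: "g ` {0<..} = {0<..}"
  proof
    show "g ` {0<..} \<subseteq> {0<..}" by (auto simp: g_def)
    show "{0<..} \<subseteq> g ` {0<..}"
    proof
      fix u :: real assume u: "u \<in> {0<..}"
      have "u = g (sqrt (u/2))" using u by (simp add: g_def)
      moreover have "sqrt (u/2) \<in> {0<..}" using u by simp
      ultimately show "u \<in> g ` {0<..}" by blast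
    qed
  qed
  have CV: "(\<lambda>x. \<bar>4 * x\<bar> * f (g x)) absolutely_integrable_on {0<..} \<and>
        integral {0<..} (\<lambda>x. \<bar>4 * x\<bar> * f (g x)) = c * Gamma z"
    using has_absolute_integral_change_of_variables_1'[of "{0<..}" g "\<lambda>t. 4 * t" f "c * Gamma z", OF _ der inj]
      fA fI img by auto
  have eq: "\<bar>4 * x\<bar> * f (g x) = x powr a * exp (- 2 * x ^ 2) * ln x ^ 0" if x: "x \<in> {0<..}" for x
  proof -
    have x0: "x > 0" using x by simp
    have e1: "2 * x ^ 2 / 2 = x powr 2" using x0 by simp
    have e3: "2 * ((a-1)/2) = a - 1" by simp
    have e2: "(x powr 2) powr ((a-1)/2) = x powr (a - 1)" unfolding powr_powr e3 ..
    have "(2 * x ^ 2 / 2) powr ((a - 1) / 2) = x powr (a - 1)" unfolding e1 e2 ..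
    moreover have "x * x powr (a - 1) = x powr a" using x0 by (simp add: powr_diff)
    ultimately show ?thesis using x0 unfolding f_def g_def
      by (simp add: exp_minus field_simps)
  qed
  have "integral {0<..} (\<lambda>t. t powr a * exp (- 2 * t ^ 2) * ln t ^ 0) = integral {0<..} (\<lambda>x. \<bar>4 * x\<bar> * f (g x))"
    by (rule integral_cong) (use eq in auto)
  also have "\<dots> = c * Gamma z" using CV by blast
  finally show ?thesis unfolding c_def z_def .
qed

lemma fp_sq: "x > 0 \<Longrightarrow> (fp p x)^2 = x powr (4*p) * exp (- 2 * x^2)"
proof -
  assume x: "x > 0"
  have "(x powr (2*p))^2 = x powr (4*p)" using x by (simp add: powr_realpow[symmetric] powr_powr)
  moreover have "(exp (- (x^2)))^2 = exp (- 2 * x^2)" by (simp add: exp_double[symmetric] power2_eq_square[of "exp _"] exp_add[symmetric])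
  ultimately show ?thesis unfolding fp_def by (simp add: power_mult_distrib)
qed

lemma term_id:
  fixes p cB \<alpha> h n a :: real
  assumes h: "h > 0" and n: "n > 0" and cB: "cB \<noteq> 0" and a: "a = 4*p+1-\<alpha>"
  shows "1 / (cB / h^2) * ((fp p (n*h))^2 * (2*n+1) * n powr (-\<alpha>)) * ln (n*h)^s
       = h powr \<alpha> * (2/cB * (h * phs a s (n*h)) + 1/cB * (h * (h * phs (a-1) s (n*h))))"
proof -
  define y where "y = n * h"
  have y: "y > 0" using h n by (simp add: y_def)
  have yn: "y powr (-\<alpha>) = n powr (-\<alpha>) * h powr (-\<alpha>)" using n h by (simp add: y_def powr_mult)
  have y1: "y powr 1 = y" using y by simp
  have ya: "y powr a = y powr (4*p) * y * (n powr (-\<alpha>) * h powr (-\<alpha>))"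
  proof -
    have "y powr a = y powr (4*p + 1 + (-\<alpha>))" using a by simp
    also have "\<dots> = y powr (4*p) * y powr 1 * y powr (-\<alpha>)" by (simp only: powr_add)
    finally show ?thesis by (simp only: y1 yn)
  qed
  have ya1: "y powr (a-1) = y powr (4*p) * (n powr (-\<alpha>) * h powr (-\<alpha>))"
  proof -
    have "y powr (a-1) = y powr (4*p + (-\<alpha>))" using a by simp
    also have "\<dots> = y powr (4*p) * y powr (-\<alpha>)" by (simp only: powr_add)
    finally show ?thesis by (simp only: yn)
  qed
  have hh: "h powr \<alpha> * h powr (-\<alpha>) = 1" using h by (simp add: powr_minus)
  define P where "P = y powr (4*p)"
  define E where "E = exp (- 2 * y^2)"
  define X where "X = h powr (-\<alpha>)"
  define Y where "Y = h powr \<alpha>"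
  have XY: "Y * X = 1" using hh unfolding X_def Y_def .
  have lhs: "1 / (cB / h^2) * ((fp p (n*h))^2 * (2*n+1) * n powr (-\<alpha>)) * ln (n*h)^s
           = h^2 / cB * (P * E * (2*n+1) * n powr (-\<alpha>)) * ln y ^ s"
    using y unfolding y_def[symmetric] P_def E_def by (simp add: fp_sq)
  have rhs: "h powr \<alpha> * (2/cB * (h * phs a s (n*h)) + 1/cB * (h * (h * phs (a-1) s (n*h))))
           = (Y * X) * (h^2 / cB * (P * E * (2*n+1) * n powr (-\<alpha>)) * ln y ^ s)"
    unfolding y_def[symmetric] phs_def ya ya1 P_def[symmetric] E_def[symmetric] X_def[symmetric] Y_def[symmetric]
    by (simp add: y_def field_simps power2_eq_square) (simp add: add_divide_distrib)
  show ?thesis unfolding lhs rhs XY by simp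
qed

lemma coef_summable:
  fixes p h r :: real
  assumes h: "h > 0" and p: "p \<ge> 0"
  shows "summable (\<lambda>l. (fp p (real (Suc l) * h))^2 * (2 * real (Suc l) + 1) * real (Suc l) powr r)"
proof -
  define e where "e = 1 + \<bar>r\<bar>"
  have pe: "0 < 4*p+e+2" using p by (simp add: e_def)
  obtain M where M: "\<And>y. y > 0 \<Longrightarrow> \<bar>phs (4*p + e) 0 y\<bar> \<le> M * y powr (-2)"
    using pow_bound[OF pe, of 0 "4*p+e" "-2"] by auto
  show ?thesis
  proof (rule summable_comparison_test'[where N=0])
    show "summable (\<lambda>l. 3 * M * h powr (-e) * h powr (-2) * real (Suc l) powr (-2))"
      by (intro summable_mult summable_Suc_powr) simp
  next
    fix l :: nat
    define n where "n = real (Suc l)"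
    define y where "y = n * h"
    have n: "n \<ge> 1" by (simp add: n_def)
    have y: "y > 0" using n h by (simp add: y_def)
    have t0: "0 \<le> (fp p y)^2 * (2 * n + 1) * n powr r" using n by simp
    have "(fp p y)^2 * (2 * n + 1) * n powr r \<le> (fp p y)^2 * (3 * n) * n powr \<bar>r\<bar>"
      using n by (intro mult_mono powr_mono) auto
    also have "\<dots> = 3 * (y powr (4*p) * exp (- 2 * y^2) * n powr e)"
      using n y by (simp add: fp_sq e_def powr_add)
    also have "n powr e = y powr e * h powr (-e)"
      using n h by (simp add: y_def powr_mult powr_minus)
    also have "3 * (y powr (4*p) * exp (- 2 * y^2) * (y powr e * h powr (-e))) = 3 * h powr (-e) * phs (4*p+e) 0 y"
      using y by (simp add: phs_def powr_add)
    also have "\<dots> \<le> 3 * h powr (-e) * (M * y powr (-2))"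
      using M[OF y] by (intro mult_left_mono) auto
    also have "y powr (-2) = h powr (-2) * n powr (-2)"
      using n h by (simp add: y_def powr_mult)
    finally have "(fp p y)^2 * (2 * n + 1) * n powr r \<le> 3 * M * h powr (-e) * h powr (-2) * n powr (-2)"
      by (simp add: mult_ac)
    then show "norm ((fp p (real (Suc l) * h))^2 * (2 * real (Suc l) + 1) * real (Suc l) powr r)
        \<le> 3 * M * h powr (-e) * h powr (-2) * real (Suc l) powr (-2)"
      using t0 unfolding n_def y_def by simp
  qed
qed

lemma sums_scale:
  fixes N v :: real
  assumes N: "N \<noteq> 0" and fg: "\<And>l. f l = N * g l" and g: "g sums v"
  shows "1 / N * suminf f = v"
proof -
  have feq: "f = (\<lambda>l. N * g l)" by (rule ext) (rule fg)
  have "(\<lambda>l. N * g l) sums (N * v)" by (rule sums_mult[OF g])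
  then have "f sums (N * v)" unfolding feq .
  then have "suminf f = N * v" by (rule sums_unique[symmetric])
  then show ?thesis using N by simp
qed

lemma core_j:
  fixes B p cB \<alpha> :: real and j :: nat
  assumes B: "B > 1" and p: "p > 0" and cB: "cB > 0"
    and sm: "\<And>s. s \<le> 2 \<Longrightarrow> summable (\<lambda>l. phs (4*p+1-\<alpha>) s (real (Suc l) * (1 / B ^ j))) \<and>
                            summable (\<lambda>l. phs (4*p+1-\<alpha>-1) s (real (Suc l) * (1 / B ^ j)))"
  defines "h \<equiv> 1 / B ^ j" and "a \<equiv> 4*p+1-\<alpha>" and "L \<equiv> real j * ln B"
  defines "A \<equiv> (\<lambda>s. 2/cB * (\<Sum>l. h * phs a s (real (Suc l) * h)) + 1/cB * (h * (\<Sum>l. h * phs (a-1) s (real (Suc l) * h))))"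
  shows "KM p cB B j \<alpha> = h powr \<alpha> * A 0"
    and "KM p cB B j differentiable (at \<alpha>)"
    and "deriv (KM p cB B j) \<alpha> = - (L * (h powr \<alpha> * A 0) + h powr \<alpha> * A 1)"
    and "deriv (KM p cB B j) differentiable (at \<alpha>)"
    and "deriv (deriv (KM p cB B j)) \<alpha> = L^2 * (h powr \<alpha> * A 0) + 2 * L * (h powr \<alpha> * A 1) + h powr \<alpha> * A 2"
    and "KM p cB B j \<alpha> > 0"
proof -
  have h: "h > 0" using B by (simp add: h_def)
  have sm': "\<And>s. s \<le> 2 \<Longrightarrow> summable (\<lambda>l. phs a s (real (Suc l) * h)) \<and> summable (\<lambda>l. phs (a-1) s (real (Suc l) * h))"
    using sm unfolding a_def h_def by blast
  define N where "N = cB / h^2"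
  have N: "N \<noteq> 0" using cB h by (simp add: N_def)
  have NJ: "Nj cB B j = N" unfolding Nj_def N_def h_def by (simp add: power_mult power2_eq_square mult.commute)
  define c where "c l = (fp p (real (Suc l) * h))^2 * (2 * real (Suc l) + 1)" for l
  have c0: "c l \<ge> 0" for l by (simp add: c_def)
  have csum: "summable (\<lambda>l. c l * real (Suc l) powr r)" for r
    unfolding c_def using coef_summable[OF h, of p r] p by simp
  define D where "D k x = (\<Sum>l. c l * real (Suc l) powr (-x) * (- ln (real (Suc l))) ^ k)" for k x
  have dD: "(D k has_real_derivative D (Suc k) x) (at x)" for k x
    unfolding D_def[abs_def] by (rule dir_deriv[OF c0 csum])
  have KMeq: "KM p cB B j = (\<lambda>x. 1 / N * D 0 x)"
    by (rule ext) (simp add: KM_def NJ D_def c_def h_def)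
  have dK: "(KM p cB B j has_real_derivative 1 / N * D 1 x) (at x)" for x
    unfolding KMeq using DERIV_cmult[OF dD[of 0 x], of "1/N"] by (simp add: One_nat_def)
  have dKeq: "deriv (KM p cB B j) = (\<lambda>x. 1 / N * D 1 x)"
    by (rule ext, rule DERIV_imp_deriv[OF dK])
  have d2K: "(deriv (KM p cB B j) has_real_derivative 1 / N * D 2 x) (at x)" for x
    unfolding dKeq using DERIV_cmult[OF dD[of 1 x], of "1/N"] by (simp add: numeral_2_eq_2)
  show "KM p cB B j differentiable (at \<alpha>)" using dK unfolding real_differentiable_def by blast
  show "deriv (KM p cB B j) differentiable (at \<alpha>)" using d2K unfolding real_differentiable_def by blast
  define W where "W s l = 1 / N * (c l * real (Suc l) powr (-\<alpha>)) * ln (real (Suc l) * h) ^ s" for s l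
  have Wsum: "W s sums (h powr \<alpha> * A s)" if s: "s \<le> 2" for s
  proof -
    have eq: "W s l = h powr \<alpha> * (2/cB * (h * phs a s (real (Suc l) * h)) + 1/cB * (h * (h * phs (a-1) s (real (Suc l) * h))))" for l
      unfolding W_def N_def c_def by (rule term_id[OF h _ _ a_def[THEN meta_eq_to_obj_eq]]) (use cB in auto)
    have s1: "(\<lambda>l. h * phs a s (real (Suc l) * h)) sums (\<Sum>l. h * phs a s (real (Suc l) * h))"
      by (rule summable_sums, rule summable_mult) (use sm'[OF s] in blast)
    have s2: "(\<lambda>l. h * phs (a-1) s (real (Suc l) * h)) sums (\<Sum>l. h * phs (a-1) s (real (Suc l) * h))"
      by (rule summable_sums, rule summable_mult) (use sm'[OF s] in blast)
    have "(\<lambda>l. h powr \<alpha> * (2/cB * (h * phs a s (real (Suc l) * h)) + 1/cB * (h * (h * phs (a-1) s (real (Suc l) * h)))))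
          sums (h powr \<alpha> * A s)"
      unfolding A_def by (intro sums_mult sums_add s1 s2)
    then show ?thesis unfolding eq[abs_def] .
  qed
  have lnn: "ln (real (Suc l)) = ln (real (Suc l) * h) + L" for l
  proof -
    have "ln (real (Suc l) * h) = ln (real (Suc l)) + ln h" using h by (simp add: ln_mult)
    moreover have "ln h = - L" using B unfolding h_def L_def by (simp add: ln_div ln_realpow)
    ultimately show ?thesis by simp
  qed
  have D0: "1 / N * D 0 \<alpha> = h powr \<alpha> * A 0"
    unfolding D_def by (rule sums_scale[OF N _ Wsum]) (use N in \<open>auto simp: W_def\<close>)
  have D1: "1 / N * D 1 \<alpha> = - (L * (h powr \<alpha> * A 0) + h powr \<alpha> * A 1)"
  proof -
    have S: "(\<lambda>l. - (L * W 0 l + W 1 l)) sums (- (L * (h powr \<alpha> * A 0) + h powr \<alpha> * A 1))"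
      by (intro sums_minus sums_add sums_mult Wsum) auto
    show ?thesis unfolding D_def
      by (rule sums_scale[OF N _ S]) (use N in \<open>simp only: W_def lnn, simp add: field_simps\<close>)
  qed
  have D2: "1 / N * D 2 \<alpha> = L^2 * (h powr \<alpha> * A 0) + 2 * L * (h powr \<alpha> * A 1) + h powr \<alpha> * A 2"
  proof -
    have S: "(\<lambda>l. L^2 * W 0 l + 2 * L * W 1 l + W 2 l) sums (L^2 * (h powr \<alpha> * A 0) + 2 * L * (h powr \<alpha> * A 1) + h powr \<alpha> * A 2)"
      by (intro sums_add sums_mult Wsum) auto
    show ?thesis unfolding D_def
      by (rule sums_scale[OF N _ S]) (use N in \<open>simp only: W_def lnn, simp add: field_simps power2_eq_square\<close>)
  qed
  show "KM p cB B j \<alpha> = h powr \<alpha> * A 0" unfolding KMeq using D0 by simp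
  show "deriv (KM p cB B j) \<alpha> = - (L * (h powr \<alpha> * A 0) + h powr \<alpha> * A 1)" unfolding dKeq using D1 by simp
  show "deriv (deriv (KM p cB B j)) \<alpha> = L^2 * (h powr \<alpha> * A 0) + 2 * L * (h powr \<alpha> * A 1) + h powr \<alpha> * A 2"
    using DERIV_imp_deriv[OF d2K] D2 by simp
  have "0 < D 0 \<alpha>" unfolding D_def
  proof (rule suminf_pos)
    show "summable (\<lambda>l. c l * real (Suc l) powr (-\<alpha>) * (- ln (real (Suc l))) ^ 0)" using csum by simp
    fix l
    have "fp p (real (Suc l) * h) > 0" using h by (simp add: fp_def)
    then show "0 < c l * real (Suc l) powr (-\<alpha>) * (- ln (real (Suc l))) ^ 0" by (simp add: c_def)
  qed
  moreover have "N > 0" using cB h by (simp add: N_def)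
  ultimately show "KM p cB B j \<alpha> > 0" unfolding KMeq by simp
qed

lemma lim_from_rate:
  fixes X :: "nat \<Rightarrow> real"
  assumes B: "B > 1" and d: "\<delta> > 0" and bd: "\<And>j. \<bar>X j\<bar> \<le> K * (1/B^j) powr \<delta>"
  shows "X \<longlonglongrightarrow> 0" "(\<lambda>j. real j * X j) \<longlonglongrightarrow> 0"
proof -
  define q where "q = B powr (-\<delta>)"
  have q0: "q > 0" using B by (simp add: q_def)
  have q1: "q < 1"
  proof -
    have "B powr (-\<delta>) < B powr 0" using B d by (intro powr_less_mono) auto
    then show ?thesis using B by (simp add: q_def)
  qed
  have pq: "(1/B^j) powr \<delta> = q ^ j" for j
  proof -
    have "(1/B^j) powr \<delta> = (B powr real j) powr (-\<delta>)"
      using B by (simp add: powr_realpow powr_minus_divide powr_divide)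
    also have "\<dots> = (B powr (-\<delta>)) powr real j" by (simp add: powr_powr mult.commute)
    also have "\<dots> = q ^ j" using q0 by (simp add: q_def powr_realpow)
    finally show ?thesis .
  qed
  have l1: "(\<lambda>j. K * q ^ j) \<longlonglongrightarrow> 0"
    by (rule tendsto_mult_right_zero[OF LIMSEQ_power_zero]) (use q0 q1 in auto)
  have l2: "(\<lambda>j. K * (real j * q ^ j)) \<longlonglongrightarrow> 0"
    by (rule tendsto_mult_right_zero[OF powser_times_n_limit_0]) (use q0 q1 in auto)
  show "X \<longlonglongrightarrow> 0"
    by (rule Lim_null_comparison[OF _ l1]) (use bd pq in auto)
  show "(\<lambda>j. real j * X j) \<longlonglongrightarrow> 0"
  proof (rule Lim_null_comparison[OF _ l2], rule always_eventually, rule allI)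
    fix j
    have "norm (real j * X j) = real j * \<bar>X j\<bar>" by (simp add: abs_mult)
    also have "\<dots> \<le> real j * (K * q ^ j)" using bd[of j] pq[of j] by (intro mult_left_mono) auto
    finally show "norm (real j * X j) \<le> K * (real j * q ^ j)" by (simp add: mult_ac)
  qed
qed

theorem proposition20:
  fixes B p cB \<alpha> :: real
  assumes "B > 1" and "p > 0" and "cB > 0" and "4 * p + 2 - \<alpha> > 0"
  shows "Ips p cB 0 \<alpha> = 2 powr (- (2 * p - \<alpha> / 2 + 1)) / cB * Gamma (2 * p + 1 - \<alpha> / 2) \<and>
         (\<exists>e. e \<longlonglongrightarrow> 0 \<and>
           (\<forall>j. KM p cB B j \<alpha> = (Ips p cB 0 \<alpha> + e j) * B powr (- \<alpha> * real j))) \<and>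
         (\<forall>j. KM p cB B j differentiable (at \<alpha>)) \<and>
         (\<exists>e. e \<longlonglongrightarrow> 0 \<and>
           (\<forall>j. deriv (KM p cB B j) \<alpha> =
                 - (real j * ln B + Ips p cB 1 \<alpha> / Ips p cB 0 \<alpha> + e j) * KM p cB B j \<alpha>)) \<and>
         (\<forall>j. deriv (KM p cB B j) differentiable (at \<alpha>)) \<and>
         (\<exists>e. e \<longlonglongrightarrow> 0 \<and>
           (\<forall>j. deriv (deriv (KM p cB B j)) \<alpha> =
                 ((real j)\<^sup>2 * (ln B)\<^sup>2 + 2 * real j * ln B * (Ips p cB 1 \<alpha> / Ips p cB 0 \<alpha>)
                  + Ips p cB 2 \<alpha> / Ips p cB 0 \<alpha> + e j) * KM p cB B j \<alpha>))"
proof -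
  note B = assms(1) and p = assms(2) and cB = assms(3)
  define a where "a = 4*p+1-\<alpha>"
  have a: "a > -1" using assms(4) by (simp add: a_def)
  define I where "I s = Ips p cB s \<alpha>" for s
  have Ieq: "I s = 2/cB * integral {0<..} (phs a s)" for s
    by (simp add: I_def Ips_def phs_def[abs_def] a_def)
  have Igam: "Ips p cB 0 \<alpha> = 2 powr (- (2 * p - \<alpha> / 2 + 1)) / cB * Gamma (2 * p + 1 - \<alpha> / 2)"
  proof -
    have "Ips p cB 0 \<alpha> = 2/cB * integral {0<..} (\<lambda>t. t powr a * exp (- 2 * t ^ 2) * ln t ^ 0)"
      unfolding Ips_def a_def by (rule refl)
    also have "\<dots> = 2/cB * (1/4 * 2 powr (-(a-1)/2) * Gamma ((a+1)/2))"
      by (simp only: gauss_gamma[OF a])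
    also have "(a+1)/2 = 2 * p + 1 - \<alpha> / 2" by (simp add: a_def field_simps)
    also have "2 powr (-(a-1)/2) = 2 * 2 powr (- (2 * p - \<alpha> / 2 + 1))"
    proof -
      have e: "-(a-1)/2 = 1 + (- (2 * p - \<alpha> / 2 + 1))" by (simp add: a_def field_simps)
      show ?thesis unfolding e powr_add by simp
    qed
    finally show ?thesis by simp
  qed
  have I0pos: "I 0 > 0"
  proof -
    have "2 * p + 1 - \<alpha> / 2 > 0" using assms(4) by simp
    then have "Gamma (2 * p + 1 - \<alpha> / 2) > 0" by (rule Gamma_real_pos)
    then show ?thesis unfolding I_def Igam using cB by simp
  qed
  define h where "h j = 1 / B ^ j" for j :: nat
  have h: "h j > 0" for j using B by (simp add: h_def)
  define A where "A s j = 2/cB * (\<Sum>l. h j * phs a s (real (Suc l) * h j)) +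
                          1/cB * (h j * (\<Sum>l. h j * phs (a-1) s (real (Suc l) * h j)))" for s j
  define L where "L j = real j * ln B" for j :: nat
  have facts: "(\<forall>j. summable (\<lambda>l. phs a s (real (Suc l) * h j)) \<and> summable (\<lambda>l. phs (a-1) s (real (Suc l) * h j)))
        \<and> (\<lambda>j. A s j - I s) \<longlonglongrightarrow> 0 \<and> (\<lambda>j. real j * (A s j - I s)) \<longlonglongrightarrow> 0" if s: "s \<le> 2" for s
  proof -
    obtain \<delta> K where d: "\<delta> > 0" and R: "\<And>h. h > 0 \<Longrightarrow> summable (\<lambda>l. phs a s (real (Suc l) * h)) \<and>
        summable (\<lambda>l. phs (a-1) s (real (Suc l) * h)) \<and>
        \<bar>2/cB * (\<Sum>l. h * phs a s (real (Suc l) * h)) + 1/cB * (h * (\<Sum>l. h * phs (a-1) s (real (Suc l) * h)))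
         - 2/cB * integral {0<..} (phs a s)\<bar> \<le> K * h powr \<delta>"
      using A_rate[OF a s, of cB] by blast
    have bd0: "\<bar>A s j - I s\<bar> \<le> K * h j powr \<delta>" for j
      using R[OF h[of j]] unfolding A_def Ieq by blast
    have bd: "\<bar>A s j - I s\<bar> \<le> K * (1/B^j) powr \<delta>" for j
      using bd0[of j] by (simp only: h_def)
    have S: "summable (\<lambda>l. phs a s (real (Suc l) * h j)) \<and> summable (\<lambda>l. phs (a-1) s (real (Suc l) * h j))" for j
      using R[OF h[of j]] by blast
    show ?thesis using S lim_from_rate[OF B d bd] by blast
  qed
  have core: "KM p cB B j \<alpha> = h j powr \<alpha> * A 0 j \<and>
    KM p cB B j differentiable (at \<alpha>) \<and>
    deriv (KM p cB B j) \<alpha> = - (L j * (h j powr \<alpha> * A 0 j) + h j powr \<alpha> * A 1 j) \<and>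
    deriv (KM p cB B j) differentiable (at \<alpha>) \<and>
    deriv (deriv (KM p cB B j)) \<alpha> = (L j)^2 * (h j powr \<alpha> * A 0 j) + 2 * L j * (h j powr \<alpha> * A 1 j) + h j powr \<alpha> * A 2 j \<and>
    KM p cB B j \<alpha> > 0" for j
  proof -
    have sm: "summable (\<lambda>l. phs (4*p+1-\<alpha>) s (real (Suc l) * (1 / B ^ j))) \<and>
              summable (\<lambda>l. phs (4*p+1-\<alpha>-1) s (real (Suc l) * (1 / B ^ j)))" if "s \<le> 2" for s
      using facts[OF that] unfolding a_def h_def by blast
    note C = core_j[OF B p cB sm]
    show ?thesis using C unfolding A_def L_def h_def a_def by simp
  qed
  have core1: "KM p cB B j \<alpha> = h j powr \<alpha> * A 0 j" for j using core[of j] by blast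
  have core3: "deriv (KM p cB B j) \<alpha> = - (L j * (h j powr \<alpha> * A 0 j) + h j powr \<alpha> * A 1 j)" for j
    using core[of j] by blast
  have core5: "deriv (deriv (KM p cB B j)) \<alpha> = (L j)^2 * (h j powr \<alpha> * A 0 j) + 2 * L j * (h j powr \<alpha> * A 1 j) + h j powr \<alpha> * A 2 j" for j
    using core[of j] by blast
  have core6: "KM p cB B j \<alpha> > 0" for j using core[of j] by blast
  have A0pos: "A 0 j > 0" for j
  proof -
    have "0 < h j powr \<alpha> * A 0 j" using core1[of j] core6[of j] by simp
    moreover have "h j powr \<alpha> > 0" using h[of j] by simp
    ultimately show ?thesis by (simp add: zero_less_mult_iff)
  qed
  have facts2: "(\<lambda>j. A s j - I s) \<longlonglongrightarrow> 0" if "s \<le> 2" for s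
    using facts[OF that] by (elim conjE) assumption
  have facts3: "(\<lambda>j. real j * (A s j - I s)) \<longlonglongrightarrow> 0" if "s \<le> 2" for s
    using facts[OF that] by (elim conjE) assumption
  have Al: "(\<lambda>j. A s j) \<longlonglongrightarrow> I s" if "s \<le> 2" for s
    by (rule LIM_zero_cancel[OF facts2[OF that]])
  have Bp: "B powr (- \<alpha> * real j) = h j powr \<alpha>" for j
  proof -
    have "h j = B powr (- real j)" using B by (simp add: h_def powr_minus powr_realpow divide_inverse)
    then show ?thesis using B by (simp add: powr_powr mult_ac)
  qed
  have P2: "\<exists>e. e \<longlonglongrightarrow> 0 \<and> (\<forall>j. KM p cB B j \<alpha> = (Ips p cB 0 \<alpha> + e j) * B powr (- \<alpha> * real j))"
  proof (intro exI conjI allI)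
    show "(\<lambda>j. A 0 j - I 0) \<longlonglongrightarrow> 0" using facts2[of 0] by simp
    fix j show "KM p cB B j \<alpha> = (Ips p cB 0 \<alpha> + (A 0 j - I 0)) * B powr (- \<alpha> * real j)"
      using core1[of j] unfolding Bp I_def by simp
  qed
  have P3: "\<exists>e. e \<longlonglongrightarrow> 0 \<and> (\<forall>j. deriv (KM p cB B j) \<alpha> =
                 - (real j * ln B + Ips p cB 1 \<alpha> / Ips p cB 0 \<alpha> + e j) * KM p cB B j \<alpha>)"
  proof (intro exI conjI allI)
    show "(\<lambda>j. A 1 j / A 0 j - I 1 / I 0) \<longlonglongrightarrow> 0"
      using tendsto_diff[OF tendsto_divide[OF Al Al] tendsto_const, of 1 0 "I 1 / I 0"] I0pos by simp
    fix j
    have "A 0 j \<noteq> 0" using A0pos[of j] by simp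
    then show "deriv (KM p cB B j) \<alpha> = - (real j * ln B + Ips p cB 1 \<alpha> / Ips p cB 0 \<alpha> + (A 1 j / A 0 j - I 1 / I 0)) * KM p cB B j \<alpha>"
      unfolding core3 core1 I_def[symmetric] L_def by (simp add: field_simps)
  qed
  have P4: "\<exists>e. e \<longlonglongrightarrow> 0 \<and> (\<forall>j. deriv (deriv (KM p cB B j)) \<alpha> =
                 ((real j)\<^sup>2 * (ln B)\<^sup>2 + 2 * real j * ln B * (Ips p cB 1 \<alpha> / Ips p cB 0 \<alpha>)
                  + Ips p cB 2 \<alpha> / Ips p cB 0 \<alpha> + e j) * KM p cB B j \<alpha>)"
  proof (intro exI conjI allI)
    define e where "e j = 2 * ln B * ((real j * (A 1 j - I 1)) * I 0 - I 1 * (real j * (A 0 j - I 0))) / (A 0 j * I 0)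
                       + (A 2 j / A 0 j - I 2 / I 0)" for j
    have l1: "(\<lambda>j. 2 * ln B * ((real j * (A 1 j - I 1)) * I 0 - I 1 * (real j * (A 0 j - I 0))) / (A 0 j * I 0)) \<longlonglongrightarrow>
              2 * ln B * (0 * I 0 - I 1 * 0) / (I 0 * I 0)"
      using facts3[of 1] facts3[of 0] I0pos by (intro tendsto_intros Al) auto
    have l2: "(\<lambda>j. A 2 j / A 0 j - I 2 / I 0) \<longlonglongrightarrow> I 2 / I 0 - I 2 / I 0"
      using I0pos by (intro tendsto_intros Al) auto
    show "e \<longlonglongrightarrow> 0" using tendsto_add[OF l1 l2] unfolding e_def[abs_def] by simp
    fix j
    have A0: "A 0 j \<noteq> 0" using A0pos[of j] by simp
    have I0: "I 0 \<noteq> 0" using I0pos by simp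
    have ej: "e j = 2 * L j * (A 1 j / A 0 j - I 1 / I 0) + (A 2 j / A 0 j - I 2 / I 0)"
      unfolding e_def L_def using A0 I0 by (simp add: field_simps)
    show "deriv (deriv (KM p cB B j)) \<alpha> =
                 ((real j)\<^sup>2 * (ln B)\<^sup>2 + 2 * real j * ln B * (Ips p cB 1 \<alpha> / Ips p cB 0 \<alpha>)
                  + Ips p cB 2 \<alpha> / Ips p cB 0 \<alpha> + e j) * KM p cB B j \<alpha>"
      unfolding core5 core1 I_def[symmetric] ej L_def using A0 I0 by (simp add: field_simps power2_eq_square)
  qed
  have core2: "KM p cB B j differentiable (at \<alpha>)" for j using core[of j] by blast
  have core4: "deriv (KM p cB B j) differentiable (at \<alpha>)" for j using core[of j] by blast
  show ?thesis using Igam P2 P3 P4 core2 core4 by blast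
qed

end
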